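(* Let $\pi>0$, $\bar d>0$, $0<\theta_1<\dots<\theta_K$, $0\le\beta_1<\dots<\beta_M\le1$, and let $A:[0,D]\to[0,\bar d]$ be continuously differentiable. Enumerate the $KM$ types $(\beta_m,\theta_k)$ as $\Lambda_1,\dots,\Lambda_{KM}$; write $L(Q,\beta,\theta)=\theta[\bar d-\beta A(Q)]-\pi(1-\beta)A(Q)$, $\bar S(Q,\Pi,\Lambda)=L(Q,\Lambda)-\Pi$ and $\sigma(Q,\beta,\theta)=-[\theta\beta+\pi(1-\beta)]A'(Q)$. Let $\Phi=\{(Q_i,\Pi_i)\}_{i=1}^{KM}$ with $Q_i\in[0,D]$ be a feasible contract, i.e. $\bar S(Q_i,\Pi_i,\Lambda_i)\ge0$ for all $i$ and $\bar S(Q_i,\Pi_i,\Lambda_i)\ge\bar S(Q_j,\Pi_j,\Lambda_i)$ for all $i\ne j$. If $\sigma(Q,\Lambda_i)>\sigma(Q,\Lambda_j)$ for all $Q\in[0,D]$, then $Q_i\ge Q_j$.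
   Context: Model: an operator offers one item (data cap $Q_i$, subscription fee $\Pi_i$) for each user type $\Lambda_i=(\beta,\theta)$ (network substitutability $\beta$, data valuation $\theta$). $\pi$ is the overage price, $\bar d$ the mean demand, $A(Q)$ the expected overage consumption under cap $Q$ (decreasing, convex). $L$ is the virtual payoff, $\bar S$ the expected payoff, and $\sigma=\partial L/\partial Q$ is the user's willingness-to-pay (marginal rate of substitution). *)

theory Defs
  imports "HOL-Analysis.Analysis"
begin

text \<open>Virtual payoff L(Q,beta,theta) = theta (dbar - beta A(Q)) - p (1-beta) A(Q),
  where p is the overage price (written pi in the paper). A type is a pair (beta, theta).\<close>
definition virt_payoff :: "real \<Rightarrow> real \<Rightarrow> (real \<Rightarrow> real) \<Rightarrow> real \<Rightarrow> real \<times> real \<Rightarrow> real" where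
  "virt_payoff p dbar A Q lam = snd lam * (dbar - fst lam * A Q) - p * (1 - fst lam) * A Q"

definition exp_payoff :: "real \<Rightarrow> real \<Rightarrow> (real \<Rightarrow> real) \<Rightarrow> real \<Rightarrow> real \<Rightarrow> real \<times> real \<Rightarrow> real" where
  "exp_payoff p dbar A Q fee lam = virt_payoff p dbar A Q lam - fee"

definition wtp :: "real \<Rightarrow> (real \<Rightarrow> real) \<Rightarrow> real \<Rightarrow> real \<times> real \<Rightarrow> real" where
  "wtp p A' Q lam = - (snd lam * fst lam + p * (1 - fst lam)) * A' Q"

end

theory Submission
  imports Defs
begin

theorem lemma4:
  fixes p dbar D :: real and K M :: nat
    and theta beta :: "nat \<Rightarrow> real"
    and A A' :: "real \<Rightarrow> real"
    and e :: "nat \<Rightarrow> nat \<times> nat"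
    and Q fee :: "nat \<Rightarrow> real"
    and i j :: nat
  assumes p_pos: "p > 0" and dbar_pos: "dbar > 0" and D_pos: "D > 0"
    and theta_pos: "0 < theta 1" and theta_mono: "strict_mono_on {1..K} theta"
    and beta_nonneg: "0 \<le> beta 1" and beta_le1: "beta M \<le> 1"
    and beta_mono: "strict_mono_on {1..M} beta"
    and A_range: "\<forall>x\<in>{0..D}. 0 \<le> A x \<and> A x \<le> dbar"
    and A_deriv: "\<forall>x\<in>{0..D}. (A has_real_derivative A' x) (at x within {0..D})"
    and A'_cont: "continuous_on {0..D} A'"
    and enum: "bij_betw e {1..K*M} ({1..M} \<times> {1..K})"
    and Q_range: "\<forall>k\<in>{1..K*M}. Q k \<in> {0..D}"
    and IR: "\<forall>k\<in>{1..K*M}.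
               exp_payoff p dbar A (Q k) (fee k) (beta (fst (e k)), theta (snd (e k))) \<ge> 0"
    and IC: "\<forall>k\<in>{1..K*M}. \<forall>l\<in>{1..K*M}. k \<noteq> l \<longrightarrow>
               exp_payoff p dbar A (Q k) (fee k) (beta (fst (e k)), theta (snd (e k)))
               \<ge> exp_payoff p dbar A (Q l) (fee l) (beta (fst (e k)), theta (snd (e k)))"
    and ij: "i \<in> {1..K*M}" "j \<in> {1..K*M}"
    and sigma_gt: "\<forall>q\<in>{0..D}. wtp p A' q (beta (fst (e i)), theta (snd (e i)))
                                  > wtp p A' q (beta (fst (e j)), theta (snd (e j)))"
  shows "Q i \<ge> Q j"
proof (rule ccontr)
  assume nge: "\<not> Q i \<ge> Q j"
  hence lt: "Q i < Q j" by simp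
  hence ne: "i \<noteq> j" by auto
  define bi where "bi = beta (fst (e i))"
  define ti where "ti = theta (snd (e i))"
  define bj where "bj = beta (fst (e j))"
  define tj where "tj = theta (snd (e j))"
  define ci where "ci = ti * bi + p * (1 - bi)"
  define cj where "cj = tj * bj + p * (1 - bj)"
  have a: "Q i \<in> {0..D}" "Q j \<in> {0..D}" using Q_range ij by auto
  have ic1: "exp_payoff p dbar A (Q i) (fee i) (bi, ti) \<ge> exp_payoff p dbar A (Q j) (fee j) (bi, ti)"
    using IC ij ne unfolding bi_def ti_def by simp
  have ic2: "exp_payoff p dbar A (Q j) (fee j) (bj, tj) \<ge> exp_payoff p dbar A (Q i) (fee i) (bj, tj)"
    using IC ij ne unfolding bj_def tj_def by simp
  have e1: "ti * (dbar - bi * A (Q i)) - p * (1 - bi) * A (Q i) - fee i \<ge> ti * (dbar - bi * A (Q j)) - p * (1 - bi) * A (Q j) - fee j"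
    using ic1 unfolding exp_payoff_def virt_payoff_def by simp
  have e2: "tj * (dbar - bj * A (Q j)) - p * (1 - bj) * A (Q j) - fee j \<ge> tj * (dbar - bj * A (Q i)) - p * (1 - bj) * A (Q i) - fee i"
    using ic2 unfolding exp_payoff_def virt_payoff_def by simp
  have r1: "ti * (dbar - bi * A (Q i)) - p * (1 - bi) * A (Q i) = ti * dbar - ci * A (Q i)"
    unfolding ci_def by (simp add: algebra_simps)
  have r2: "ti * (dbar - bi * A (Q j)) - p * (1 - bi) * A (Q j) = ti * dbar - ci * A (Q j)"
    unfolding ci_def by (simp add: algebra_simps)
  have r3: "tj * (dbar - bj * A (Q j)) - p * (1 - bj) * A (Q j) = tj * dbar - cj * A (Q j)"
    unfolding cj_def by (simp add: algebra_simps)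
  have r4: "tj * (dbar - bj * A (Q i)) - p * (1 - bj) * A (Q i) = tj * dbar - cj * A (Q i)"
    unfolding cj_def by (simp add: algebra_simps)
  have "ci * A (Q j) - ci * A (Q i) - (cj * A (Q j) - cj * A (Q i)) \<ge> 0"
    using e1 e2 unfolding r1 r2 r3 r4 by linarith
  hence key: "(ci - cj) * (A (Q j) - A (Q i)) \<ge> 0" by (simp add: algebra_simps)
  have der: "\<And>x. \<lbrakk>Q i \<le> x; x \<le> Q j\<rbrakk> \<Longrightarrow> (A has_derivative (\<lambda>h. h * A' x)) (at x within {Q i..Q j})"
  proof -
    fix x assume "Q i \<le> x" "x \<le> Q j"
    hence x: "x \<in> {0..D}" using a by auto
    have sub: "{Q i..Q j} \<subseteq> {0..D}" using a by auto
    have "(A has_real_derivative A' x) (at x within {Q i..Q j})"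
      using has_field_derivative_subset[OF A_deriv[rule_format, OF x] sub] .
    thus "(A has_derivative (\<lambda>h. h * A' x)) (at x within {Q i..Q j})"
      by (simp add: has_field_derivative_def mult.commute[of _ "A' x"])
  qed
  obtain z where z: "z \<in> {Q i..Q j}" "A (Q j) - A (Q i) = (Q j - Q i) * A' z"
    using mvt_very_simple[of "Q i" "Q j" A "\<lambda>x h. h * A' x", OF _ der] lt by auto
  have zD: "z \<in> {0..D}" using z a by auto
  have "wtp p A' z (bi, ti) > wtp p A' z (bj, tj)"
    using sigma_gt zD unfolding bi_def ti_def bj_def tj_def by blast
  hence "- ci * A' z > - cj * A' z" unfolding wtp_def ci_def cj_def by simp
  hence s: "(ci - cj) * A' z < 0" by (simp add: algebra_simps)
  have "(ci - cj) * (A (Q j) - A (Q i)) = (Q j - Q i) * ((ci - cj) * A' z)"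
    by (simp only: z(2)) (simp add: algebra_simps)
  also have "\<dots> < 0" using lt s by (simp add: mult_pos_neg)
  finally show False using key by simp
qed

end
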